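(* Let $G$ and $G'$ be isomorphic cographs such that, for each of them, the set of robust modules ordered by reverse inclusion has no least element. Suppose $G=\Sigma C$ and $G'=\Sigma C'$ where $C=(I,\le,\ell)$ and $C'=(I',\le',\ell')$ are reduced labelled chains. Then there are infinite initial segments $W$ of $I$ and $W'$ of $I'$ and an isomorphism of labelled chains from $C_{\restriction W}$ onto $C'_{\restriction W'}$.
   Context: Graphs are undirected and loopless; a cograph is a graph with no induced subgraph isomorphic to the path $P_4$. For a graph $G$ with vertex set $V$, a module is a set $A\subseteq V$ such that for all $a,a'\in A$ and $b\in V\setminus A$, $ab$ is an edge iff $a'b$ is an edge; a module $A$ is strong if every module is either comparable to $A$ under inclusion or disjoint from it; a module is robust if it is a singleton or the intersection of all strong modules containing $\{x,y\}$ for some distinct vertices $x,y$. A labelled chain is $C=(I,\le,\ell)$ with $(I,\le)$ a chain and $\ell(i)=(G_i,r(i))$, $G_i$ a non-empty cograph and $r(i)\in\{0,1\}$. Its sum $\Sigma C$ is the disjoint union of the $G_i$ in which vertices of the same $G_i$ are adjacent as in $G_i$, and $x\in G_i$, $y\in G_j$ with $i<j$ are adjacent iff $r(i)=1$. The direct sum of graphs is their disjoint union with no edges between them; the complete sum is their disjoint union with all edges between distinct summands. $C$ is reduced if $(I,\le)$ is infinite; in every interval of $I$ with at least two elements both values $0$ and $1$ of $r$ occur; if $r(i)=0$ then $G_i$ is not a complete sum of at least two non-empty graphs; if $r(i)=1$ then $G_i$ is not a direct sum of at least two non-empty graphs; and if $i$ is the largest element of $I$ then $G_i$ is a direct sum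 or a complete sum of at least two single-vertex graphs. For $W\subseteq I$, $C_{\restriction W}=(W,\le,\ell_{\restriction W})$. An isomorphism of labelled chains $(I,\le,\ell)\to(I',\le',\ell')$ is an order isomorphism $h$ such that $G_i$ is isomorphic to $G'_{h(i)}$ and $r(i)=r'(h(i))$ for all $i$. *)

theory Defs
  imports Main
begin

type_synonym 'a graph = "'a set \<times> ('a \<Rightarrow> 'a \<Rightarrow> bool)"

definition verts :: "'a graph \<Rightarrow> 'a set" where "verts G = fst G"
definition adj :: "'a graph \<Rightarrow> 'a \<Rightarrow> 'a \<Rightarrow> bool" where "adj G = snd G"

definition is_graph :: "'a graph \<Rightarrow> bool" where
  "is_graph G \<longleftrightarrow> (\<forall>x y. adj G x y \<longrightarrow> x \<in> verts G \<and> y \<in> verts G \<and> adj G y x \<and> x \<noteq> y)"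

definition cograph :: "'a graph \<Rightarrow> bool" where
  "cograph G \<longleftrightarrow> is_graph G \<and>
     \<not> (\<exists>a\<in>verts G. \<exists>b\<in>verts G. \<exists>c\<in>verts G. \<exists>d\<in>verts G.
          distinct [a,b,c,d] \<and> adj G a b \<and> adj G b c \<and> adj G c d \<and>
          \<not> adj G a c \<and> \<not> adj G b d \<and> \<not> adj G a d)"

definition graph_iso :: "'a graph \<Rightarrow> 'b graph \<Rightarrow> bool" where
  "graph_iso G H \<longleftrightarrow> (\<exists>f. bij_betw f (verts G) (verts H) \<and>
     (\<forall>x\<in>verts G. \<forall>y\<in>verts G. adj G x y \<longleftrightarrow> adj H (f x) (f y)))"

definition is_module :: "'a graph \<Rightarrow> 'a set \<Rightarrow> bool" where
  "is_module G A \<longleftrightarrow> A \<subseteq> verts G \<and>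
     (\<forall>a\<in>A. \<forall>a'\<in>A. \<forall>b\<in>verts G - A. adj G a b \<longleftrightarrow> adj G a' b)"

definition strong_module :: "'a graph \<Rightarrow> 'a set \<Rightarrow> bool" where
  "strong_module G A \<longleftrightarrow> is_module G A \<and>
     (\<forall>B. is_module G B \<longrightarrow> A \<subseteq> B \<or> B \<subseteq> A \<or> A \<inter> B = {})"

definition robust_module :: "'a graph \<Rightarrow> 'a set \<Rightarrow> bool" where
  "robust_module G A \<longleftrightarrow>
     (\<exists>x\<in>verts G. A = {x}) \<or>
     (\<exists>x\<in>verts G. \<exists>y\<in>verts G. x \<noteq> y \<and>
        A = \<Inter>{S. strong_module G S \<and> {x, y} \<subseteq> S})"

text \<open>The set of robust modules, ordered by reverse inclusion, has a least element,
  i.e. a robust module containing every robust module.\<close>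
definition robust_has_least :: "'a graph \<Rightarrow> bool" where
  "robust_has_least G \<longleftrightarrow>
     (\<exists>L. robust_module G L \<and> (\<forall>A. robust_module G A \<longrightarrow> A \<subseteq> L))"

text \<open>Decomposition of the vertex set into at least two non-empty blocks
  (the vertex sets of the summands).\<close>
definition vertex_partition :: "'a graph \<Rightarrow> 'a set set \<Rightarrow> bool" where
  "vertex_partition G P \<longleftrightarrow> \<Union>P = verts G \<and> {} \<notin> P \<and>
     (\<forall>X\<in>P. \<forall>Y\<in>P. X \<noteq> Y \<longrightarrow> X \<inter> Y = {}) \<and> (\<exists>X\<in>P. \<exists>Y\<in>P. X \<noteq> Y)"

definition direct_sum_decomp :: "'a graph \<Rightarrow> 'a set set \<Rightarrow> bool" where
  "direct_sum_decomp G P \<longleftrightarrow> vertex_partition G P \<and>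
     (\<forall>X\<in>P. \<forall>Y\<in>P. X \<noteq> Y \<longrightarrow> (\<forall>x\<in>X. \<forall>y\<in>Y. \<not> adj G x y))"

definition complete_sum_decomp :: "'a graph \<Rightarrow> 'a set set \<Rightarrow> bool" where
  "complete_sum_decomp G P \<longleftrightarrow> vertex_partition G P \<and>
     (\<forall>X\<in>P. \<forall>Y\<in>P. X \<noteq> Y \<longrightarrow> (\<forall>x\<in>X. \<forall>y\<in>Y. adj G x y))"

definition is_chain :: "'i set \<Rightarrow> ('i \<Rightarrow> 'i \<Rightarrow> bool) \<Rightarrow> bool" where
  "is_chain I le \<longleftrightarrow>
     (\<forall>i\<in>I. le i i) \<and>
     (\<forall>i\<in>I. \<forall>j\<in>I. le i j \<and> le j i \<longrightarrow> i = j) \<and>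
     (\<forall>i\<in>I. \<forall>j\<in>I. \<forall>k\<in>I. le i j \<and> le j k \<longrightarrow> le i k) \<and>
     (\<forall>i\<in>I. \<forall>j\<in>I. le i j \<or> le j i)"

text \<open>A labelled chain (I, le, l) with l i = (G i, r i); the value r i = True stands
  for 1 and r i = False for 0.\<close>
definition labelled_chain ::
    "'i set \<Rightarrow> ('i \<Rightarrow> 'i \<Rightarrow> bool) \<Rightarrow> ('i \<Rightarrow> 'v graph) \<Rightarrow> ('i \<Rightarrow> bool) \<Rightarrow> bool" where
  "labelled_chain I le G r \<longleftrightarrow> is_chain I le \<and>
     (\<forall>i\<in>I. cograph (G i) \<and> verts (G i) \<noteq> {})"

definition chain_sum ::
    "'i set \<Rightarrow> ('i \<Rightarrow> 'i \<Rightarrow> bool) \<Rightarrow> ('i \<Rightarrow> 'v graph) \<Rightarrow> ('i \<Rightarrow> bool) \<Rightarrow> ('i \<times> 'v) graph" where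
  "chain_sum I le G r =
     (Sigma I (\<lambda>i. verts (G i)),
      \<lambda>(i, x) (j, y). (i, x) \<in> Sigma I (\<lambda>i. verts (G i)) \<and> (j, y) \<in> Sigma I (\<lambda>i. verts (G i)) \<and>
         (if i = j then adj (G i) x y
          else if le i j then r i else r j))"

definition chain_interval :: "'i set \<Rightarrow> ('i \<Rightarrow> 'i \<Rightarrow> bool) \<Rightarrow> 'i set \<Rightarrow> bool" where
  "chain_interval I le J \<longleftrightarrow> J \<subseteq> I \<and>
     (\<forall>x\<in>J. \<forall>z\<in>J. \<forall>y\<in>I. le x y \<and> le y z \<longrightarrow> y \<in> J)"

definition reduced_chain ::
    "'i set \<Rightarrow> ('i \<Rightarrow> 'i \<Rightarrow> bool) \<Rightarrow> ('i \<Rightarrow> 'v graph) \<Rightarrow> ('i \<Rightarrow> bool) \<Rightarrow> bool" where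
  "reduced_chain I le G r \<longleftrightarrow>
     infinite I \<and>
     (\<forall>J. chain_interval I le J \<and> (\<exists>x\<in>J. \<exists>y\<in>J. x \<noteq> y) \<longrightarrow>
          (\<exists>x\<in>J. r x = False) \<and> (\<exists>x\<in>J. r x = True)) \<and>
     (\<forall>i\<in>I. r i = False \<longrightarrow> \<not> (\<exists>P. complete_sum_decomp (G i) P)) \<and>
     (\<forall>i\<in>I. r i = True \<longrightarrow> \<not> (\<exists>P. direct_sum_decomp (G i) P)) \<and>
     (\<forall>i\<in>I. (\<forall>j\<in>I. le j i) \<longrightarrow>
        (\<exists>P. (direct_sum_decomp (G i) P \<or> complete_sum_decomp (G i) P) \<and>
             (\<forall>X\<in>P. \<exists>x. X = {x})))"

definition initial_segment :: "'i set \<Rightarrow> ('i \<Rightarrow> 'i \<Rightarrow> bool) \<Rightarrow> 'i set \<Rightarrow> bool" where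
  "initial_segment I le W \<longleftrightarrow> W \<subseteq> I \<and> (\<forall>w\<in>W. \<forall>i\<in>I. le i w \<longrightarrow> i \<in> W)"

definition lchain_iso ::
    "'i set \<Rightarrow> ('i \<Rightarrow> 'i \<Rightarrow> bool) \<Rightarrow> ('i \<Rightarrow> 'v graph) \<Rightarrow> ('i \<Rightarrow> bool) \<Rightarrow>
     'j set \<Rightarrow> ('j \<Rightarrow> 'j \<Rightarrow> bool) \<Rightarrow> ('j \<Rightarrow> 'w graph) \<Rightarrow> ('j \<Rightarrow> bool) \<Rightarrow> ('i \<Rightarrow> 'j) \<Rightarrow> bool" where
  "lchain_iso W le G r W' le' G' r' h \<longleftrightarrow>
     bij_betw h W W' \<and>
     (\<forall>i\<in>W. \<forall>j\<in>W. le i j \<longleftrightarrow> le' (h i) (h j)) \<and>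
     (\<forall>i\<in>W. graph_iso (G i) (G' (h i)) \<and> r i = r' (h i))"

end

theory Submission
  imports Defs
begin


definition iso_map :: "('a \<Rightarrow> 'b) \<Rightarrow> 'a graph \<Rightarrow> 'b graph \<Rightarrow> bool" where
  "iso_map f G H \<longleftrightarrow> bij_betw f (verts G) (verts H) \<and>
     (\<forall>x\<in>verts G. \<forall>y\<in>verts G. adj G x y \<longleftrightarrow> adj H (f x) (f y))"

lemma graph_iso_map: "graph_iso G H \<longleftrightarrow> (\<exists>f. iso_map f G H)"
  unfolding graph_iso_def iso_map_def by blast

lemma iso_inv:
  assumes "iso_map f G H" shows "iso_map (inv_into (verts G) f) H G"
proof -
  have b: "bij_betw f (verts G) (verts H)" and a: "\<forall>x\<in>verts G. \<forall>y\<in>verts G. adj G x y \<longleftrightarrow> adj H (f x) (f y)"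
    using assms unfolding iso_map_def by auto
  have b2: "bij_betw (inv_into (verts G) f) (verts H) (verts G)" using b by (rule bij_betw_inv_into)
  show ?thesis unfolding iso_map_def
  proof (intro conjI ballI b2)
    fix x y assume x: "x \<in> verts H" and y: "y \<in> verts H"
    have "inv_into (verts G) f x \<in> verts G" "inv_into (verts G) f y \<in> verts G"
      using b2 x y bij_betwE by blast+
    moreover have "f (inv_into (verts G) f x) = x" "f (inv_into (verts G) f y) = y"
      using b x y by (auto simp: bij_betw_def f_inv_into_f)
    ultimately show "adj H x y \<longleftrightarrow> adj G (inv_into (verts G) f x) (inv_into (verts G) f y)"
      using a by metis
  qed
qed

lemma iso_comp:
  assumes "iso_map f G H" "iso_map g H K" shows "iso_map (g \<circ> f) G K"
proof -
  have b1: "bij_betw f (verts G) (verts H)" and a1: "\<forall>x\<in>verts G. \<forall>y\<in>verts G. adj G x y \<longleftrightarrow> adj H (f x) (f y)"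
    using assms(1) unfolding iso_map_def by auto
  have b2: "bij_betw g (verts H) (verts K)" and a2: "\<forall>x\<in>verts H. \<forall>y\<in>verts H. adj H x y \<longleftrightarrow> adj K (g x) (g y)"
    using assms(2) unfolding iso_map_def by auto
  show ?thesis unfolding iso_map_def
  proof (intro conjI ballI)
    show "bij_betw (g \<circ> f) (verts G) (verts K)" using b1 b2 by (rule bij_betw_trans)
    fix x y assume "x \<in> verts G" "y \<in> verts G"
    moreover have "f x \<in> verts H" "f y \<in> verts H" using calculation b1 bij_betwE by blast+
    ultimately show "adj G x y \<longleftrightarrow> adj K ((g \<circ> f) x) ((g \<circ> f) y)" using a1 a2 by simp
  qed
qed

lemma module_sub: "is_module G A \<Longrightarrow> A \<subseteq> verts G"
  unfolding is_module_def by simp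

lemma strong_mod: "strong_module G A \<Longrightarrow> is_module G A"
  unfolding strong_module_def by simp

lemma strong_sub: "strong_module G A \<Longrightarrow> A \<subseteq> verts G"
  unfolding strong_module_def is_module_def by simp

lemma strong_cmp: "strong_module G A \<Longrightarrow> is_module G B \<Longrightarrow> A \<subseteq> B \<or> B \<subseteq> A \<or> A \<inter> B = {}"
  unfolding strong_module_def by blast

lemma module_eq: "is_module G A \<Longrightarrow> a \<in> A \<Longrightarrow> a' \<in> A \<Longrightarrow> b \<in> verts G \<Longrightarrow> b \<notin> A \<Longrightarrow> adj G a b = adj G a' b"
  unfolding is_module_def by blast

lemma iso_module:
  assumes "iso_map f G H" "is_module G A" shows "is_module H (f ` A)"
proof -
  have b: "bij_betw f (verts G) (verts H)" and a: "\<forall>x\<in>verts G. \<forall>y\<in>verts G. adj G x y \<longleftrightarrow> adj H (f x) (f y)"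
    using assms unfolding iso_map_def by auto
  have A: "A \<subseteq> verts G" and m: "\<forall>a\<in>A. \<forall>a'\<in>A. \<forall>b\<in>verts G - A. adj G a b \<longleftrightarrow> adj G a' b"
    using assms(2) unfolding is_module_def by blast+
  show ?thesis unfolding is_module_def
  proof (intro conjI ballI)
    show "f ` A \<subseteq> verts H" using A b bij_betw_imp_surj_on by blast
    fix a a' b' assume a1: "a \<in> f ` A" and a2: "a' \<in> f ` A" and a3: "b' \<in> verts H - f ` A"
    obtain a0 where a0: "a0 \<in> A" "a = f a0" using a1 by blast
    obtain a0' where a0': "a0' \<in> A" "a' = f a0'" using a2 by blast
    have "b' \<in> f ` verts G" using a3 b bij_betw_imp_surj_on by blast
    then obtain b0 where b0: "b0 \<in> verts G" "b' = f b0" by blast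
    have "b0 \<notin> A" using a3 b0 by blast
    then have "adj G a0 b0 = adj G a0' b0" using m a0 a0' b0 by blast
    moreover have "a0 \<in> verts G" "a0' \<in> verts G" using a0 a0' A by blast+
    ultimately show "adj H a b' \<longleftrightarrow> adj H a' b'" using a a0 a0' b0 by simp
  qed
qed

lemma strong_verts: "strong_module H (verts H)"
  unfolding strong_module_def is_module_def by auto

lemma iso_strong:
  assumes "iso_map f G H" "strong_module G A" shows "strong_module H (f ` A)"
proof -
  let ?g = "inv_into (verts G) f"
  have b: "bij_betw f (verts G) (verts H)" using assms unfolding iso_map_def by auto
  have A: "A \<subseteq> verts G" using assms(2) by (rule strong_sub)
  show ?thesis unfolding strong_module_def
  proof (intro conjI allI impI)
    show "is_module H (f ` A)" using iso_module[OF assms(1) strong_mod[OF assms(2)]] .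
    fix B assume B: "is_module H B"
    have Bs: "B \<subseteq> verts H" using B by (rule module_sub)
    have gB: "is_module G (?g ` B)" using iso_module[OF iso_inv[OF assms(1)] B] .
    have gBs: "?g ` B \<subseteq> verts G" using gB by (rule module_sub)
    have fg: "f ` (?g ` B) = B" using Bs b by (simp add: bij_betw_def image_inv_into_cancel)
    have inj: "inj_on f (verts G)" using b by (rule bij_betw_imp_inj_on)
    have "A \<subseteq> ?g ` B \<or> ?g ` B \<subseteq> A \<or> A \<inter> ?g ` B = {}" using strong_cmp[OF assms(2) gB] .
    moreover have "f ` (A \<inter> ?g ` B) = f ` A \<inter> f ` (?g ` B)"
      using inj A gBs by (intro inj_on_image_Int) auto
    ultimately show "f ` A \<subseteq> B \<or> B \<subseteq> f ` A \<or> f ` A \<inter> B = {}"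
      using fg by (metis image_empty image_mono)
  qed
qed

lemma iso_robust:
  assumes "iso_map f G H" "robust_module G R" shows "robust_module H (f ` R)"
proof -
  let ?g = "inv_into (verts G) f"
  have b: "bij_betw f (verts G) (verts H)" using assms unfolding iso_map_def by auto
  have inj: "inj_on f (verts G)" using b by (rule bij_betw_imp_inj_on)
  have gi: "iso_map ?g H G" using iso_inv[OF assms(1)] .
  from assms(2) consider (s) x where "x \<in> verts G" "R = {x}"
    | (p) x y where "x\<in>verts G" "y\<in>verts G" "x \<noteq> y" "R = \<Inter>{S. strong_module G S \<and> {x, y} \<subseteq> S}"
    unfolding robust_module_def by blast
  then show ?thesis
  proof cases
    case s
    then show ?thesis unfolding robust_module_def using b bij_betwE by fastforce
  next
    case p
    have fx: "f x \<in> verts H" "f y \<in> verts H" "f x \<noteq> f y" using p b inj by (auto simp: bij_betw_def inj_on_def)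
    have gfx: "?g (f x) = x" "?g (f y) = y" using p inj by auto
    have "f ` R = \<Inter>{S. strong_module H S \<and> {f x, f y} \<subseteq> S}"
    proof
      show "f ` R \<subseteq> \<Inter>{S. strong_module H S \<and> {f x, f y} \<subseteq> S}"
      proof (intro subsetI InterI)
        fix w S assume w: "w \<in> f ` R" and S: "S \<in> {S. strong_module H S \<and> {f x, f y} \<subseteq> S}"
        then obtain z where z: "z \<in> R" "w = f z" by auto
        have Ss: "S \<subseteq> verts H" using S strong_sub by blast
        have "strong_module G (?g ` S)" using iso_strong[OF gi] S by blast
        moreover have "{x,y} \<subseteq> ?g ` S" using S gfx by (auto intro: rev_image_eqI)
        ultimately have "z \<in> ?g ` S" using z p by blast
        then show "w \<in> S" using z Ss b by (auto simp: bij_betw_def f_inv_into_f subsetD)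
      qed
    next
      show "\<Inter>{S. strong_module H S \<and> {f x, f y} \<subseteq> S} \<subseteq> f ` R"
      proof
        fix w assume w: "w \<in> \<Inter>{S. strong_module H S \<and> {f x, f y} \<subseteq> S}"
        have "w \<in> verts H" using w strong_verts fx by blast
        then obtain z where z: "z \<in> verts G" "w = f z" using b by (auto simp: bij_betw_def)
        have "z \<in> R" unfolding p(4)
        proof
          fix S assume S: "S \<in> {S. strong_module G S \<and> {x, y} \<subseteq> S}"
          have Ss: "S \<subseteq> verts G" using S strong_sub by blast
          have "f ` S \<in> {S. strong_module H S \<and> {f x, f y} \<subseteq> S}" using S iso_strong[OF assms(1)] by auto
          then have "f z \<in> f ` S" using w z by blast
          then show "z \<in> S" using inj Ss z by (auto simp: inj_on_def)
        qed
        then show "w \<in> f ` R" using z by auto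
      qed
    qed
    then show ?thesis unfolding robust_module_def using fx by blast
  qed
qed



locale rc =
  fixes I :: "'i set" and le :: "'i \<Rightarrow> 'i \<Rightarrow> bool" and G :: "'i \<Rightarrow> 'v graph" and r :: "'i \<Rightarrow> bool"
  assumes lc: "labelled_chain I le G r" and red: "reduced_chain I le G r"
begin

definition V where "V = Sigma I (\<lambda>i. verts (G i))"
definition U where "U k = {z. z \<in> V \<and> le k (fst z)}"
definition Ug where "Ug k = {z. z \<in> V \<and> le k (fst z) \<and> fst z \<noteq> k}"
definition B where "B k = {z. z \<in> V \<and> fst z = k}"

abbreviation S where "S \<equiv> chain_sum I le G r"

lemma refl: "i \<in> I \<Longrightarrow> le i i" using lc unfolding labelled_chain_def is_chain_def by blast
lemma antisym: "i \<in> I \<Longrightarrow> j \<in> I \<Longrightarrow> le i j \<Longrightarrow> le j i \<Longrightarrow> i = j"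
  using lc unfolding labelled_chain_def is_chain_def by blast
lemma trans: "i \<in> I \<Longrightarrow> j \<in> I \<Longrightarrow> k \<in> I \<Longrightarrow> le i j \<Longrightarrow> le j k \<Longrightarrow> le i k"
  using lc unfolding labelled_chain_def is_chain_def by blast
lemma total: "i \<in> I \<Longrightarrow> j \<in> I \<Longrightarrow> le i j \<or> le j i"
  using lc unfolding labelled_chain_def is_chain_def by blast
lemma ne: "i \<in> I \<Longrightarrow> \<exists>x. x \<in> verts (G i)"
  using lc unfolding labelled_chain_def by blast
lemma infI: "infinite I" using red unfolding reduced_chain_def by (elim conjE)

lemma verts_S: "verts S = V" unfolding chain_sum_def verts_def V_def by simp

lemma inV: "(i, x) \<in> V \<longleftrightarrow> i \<in> I \<and> x \<in> verts (G i)" unfolding V_def by simp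

lemma adj_S: "adj S (i, x) (j, y) = ((i, x) \<in> V \<and> (j, y) \<in> V \<and>
         (if i = j then adj (G i) x y else if le i j then r i else r j))"
  unfolding chain_sum_def adj_def V_def by simp

lemma adj_lt: "(i, x) \<in> V \<Longrightarrow> (j, y) \<in> V \<Longrightarrow> le i j \<Longrightarrow> i \<noteq> j \<Longrightarrow> adj S (i, x) (j, y) = r i"
  by (simp add: adj_S)

lemma adj_gt: "(i, x) \<in> V \<Longrightarrow> (j, y) \<in> V \<Longrightarrow> le j i \<Longrightarrow> i \<noteq> j \<Longrightarrow> adj S (i, x) (j, y) = r j"
  using antisym by (auto simp add: adj_S inV)

lemma adj_eq: "(i, x) \<in> V \<Longrightarrow> (i, y) \<in> V \<Longrightarrow> adj S (i, x) (i, y) = adj (G i) x y"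
  by (simp add: adj_S)

lemma red_int: "\<forall>J. chain_interval I le J \<and> (\<exists>x\<in>J. \<exists>y\<in>J. x \<noteq> y) \<longrightarrow>
          (\<exists>x\<in>J. r x = False) \<and> (\<exists>x\<in>J. r x = True)"
  using red unfolding reduced_chain_def by (elim conjE)
lemma red_F: "\<forall>i\<in>I. r i = False \<longrightarrow> \<not> (\<exists>P. complete_sum_decomp (G i) P)"
  using red unfolding reduced_chain_def by (elim conjE)
lemma red_T: "\<forall>i\<in>I. r i = True \<longrightarrow> \<not> (\<exists>P. direct_sum_decomp (G i) P)"
  using red unfolding reduced_chain_def by (elim conjE)
lemma red_max: "\<forall>i\<in>I. (\<forall>j\<in>I. le j i) \<longrightarrow>
        (\<exists>P. (direct_sum_decomp (G i) P \<or> complete_sum_decomp (G i) P) \<and>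
             (\<forall>X\<in>P. \<exists>x. X = {x}))"
  using red unfolding reduced_chain_def by (elim conjE)

lemma interval_diff:
  assumes "i \<in> I" "k \<in> I" "le i k" "i \<noteq> k"
  shows "\<exists>p\<in>I. le i p \<and> le p k \<and> r p \<noteq> r i"
proof -
  define J where "J = {m\<in>I. le i m \<and> le m k}"
  have "chain_interval I le J" unfolding chain_interval_def
  proof (intro conjI ballI impI)
    show "J \<subseteq> I" unfolding J_def by blast
    fix x z y assume x: "x \<in> J" and z: "z \<in> J" and y: "y \<in> I" and h: "le x y \<and> le y z"
    have "le i y" using trans[OF assms(1) _ y, of x] x h unfolding J_def by blast
    moreover have "le y k" using trans[OF y _ assms(2), of z] z h unfolding J_def by blast
    ultimately show "y \<in> J" using y unfolding J_def by blast
  qed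
  moreover have "i \<in> J" "k \<in> J" using assms refl unfolding J_def by auto
  ultimately have "\<exists>x\<in>J. \<exists>y\<in>J. x \<noteq> y" "chain_interval I le J" using assms(4) by blast+
  then have "(\<exists>x\<in>J. r x = False) \<and> (\<exists>x\<in>J. r x = True)"
    using red_int by blast
  then obtain p where "p \<in> J" "r p \<noteq> r i" by (cases "r i") auto
  then show ?thesis unfolding J_def by blast
qed

lemma max_block:
  assumes "j \<in> I" "\<forall>q\<in>I. le q j" "y \<in> verts (G j)" "c \<in> verts (G j)" "y \<noteq> c"
  shows "adj (G j) y c = r j"
proof -
  obtain P where P: "direct_sum_decomp (G j) P \<or> complete_sum_decomp (G j) P" and sg: "\<forall>X\<in>P. \<exists>x. X = {x}"
    using red_max assms(1,2) by blast
  have vp: "vertex_partition (G j) P" using P unfolding direct_sum_decomp_def complete_sum_decomp_def by blast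
  then have "\<Union>P = verts (G j)" unfolding vertex_partition_def by blast
  then obtain X Y where XY: "X \<in> P" "Y \<in> P" "y \<in> X" "c \<in> Y" using assms(3,4) by blast
  have "X \<noteq> Y" using sg XY assms(5) by force
  show ?thesis
  proof (cases "r j")
    case True
    then have "\<not> direct_sum_decomp (G j) P" using red_T assms(1) by blast
    then have "complete_sum_decomp (G j) P" using P by blast
    then have "\<forall>X\<in>P. \<forall>Y\<in>P. X \<noteq> Y \<longrightarrow> (\<forall>x\<in>X. \<forall>y\<in>Y. adj (G j) x y)" unfolding complete_sum_decomp_def by blast
    then show ?thesis using XY \<open>X \<noteq> Y\<close> True by blast
  next
    case False
    then have "\<not> complete_sum_decomp (G j) P" using red_F assms(1) by blast
    then have "direct_sum_decomp (G j) P" using P by blast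
    then have "\<forall>X\<in>P. \<forall>Y\<in>P. X \<noteq> Y \<longrightarrow> (\<forall>x\<in>X. \<forall>y\<in>Y. \<not> adj (G j) x y)" unfolding direct_sum_decomp_def by blast
    then show ?thesis using XY \<open>X \<noteq> Y\<close> False by blast
  qed
qed

lemma MV: "is_module S M \<Longrightarrow> M \<subseteq> V" using module_sub[of S M] verts_S by simp

lemma meq: "is_module S M \<Longrightarrow> a \<in> M \<Longrightarrow> a' \<in> M \<Longrightarrow> b \<in> V \<Longrightarrow> b \<notin> M \<Longrightarrow> adj S a b = adj S a' b"
  using module_eq[of S M a a' b] verts_S by simp

lemma lemA:
  assumes M: "is_module S M" and xi: "(i,x) \<in> M" and yj: "(j,y) \<in> M" and lij: "le i j" "i \<noteq> j"
  shows "Ug i \<subseteq> M"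
proof
  have iV: "(i,x) \<in> V" "(j,y) \<in> V" using MV[OF M] xi yj by auto
  hence iI: "i \<in> I" "j \<in> I" by (auto simp: inV)
  fix z assume "z \<in> Ug i"
  then obtain k c where z: "z = (k,c)" "(k,c) \<in> V" "le i k" "k \<noteq> i" unfolding Ug_def by (cases z) auto
  have kI: "k \<in> I" using z by (simp add: inV)
  show "z \<in> M"
  proof (rule ccontr)
    assume zn: "z \<notin> M"
    have e1: "adj S (i,x) (k,c) = r i" using adj_lt[OF iV(1) z(2) z(3)] z(4) by simp
    have P: "(p,e) \<in> M" if "(p,e)\<in>V" "le i p" "le p j" "p \<noteq> i" "p \<noteq> j" "r p \<noteq> r i" for p e
    proof (rule ccontr)
      assume "(p,e) \<notin> M"
      then have "adj S (i,x) (p,e) = adj S (j,y) (p,e)" using meq[OF M] xi yj that(1) by blast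
      moreover have "adj S (i,x) (p,e) = r i" using adj_lt[OF iV(1) that(1) that(2)] that(4) by simp
      moreover have "adj S (j,y) (p,e) = r p" using adj_gt[OF iV(2) that(1) that(3)] that(5) by simp
      ultimately show False using that by simp
    qed
    have Q: "adj S (p,e) (k,c) = r i" if "(p,e) \<in> M" for p e
      using meq[OF M that xi z(2)] zn z e1 by simp
    have "le k j \<or> le j k" using total kI iI by blast
    then consider "k = j" | "le k j" "k \<noteq> j" | "le j k" "k \<noteq> j" by blast
    then show False
    proof cases
      case 2
      obtain p where p: "p\<in>I" "le i p" "le p k" "r p \<noteq> r i" using interval_diff[of i k] iI kI z by blast
      show False
      proof (cases "p = k")
        case True
        have "adj S (j,y) (k,c) = r k" using adj_gt[OF iV(2) z(2) 2(1)] 2(2) by simp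
        then show False using Q[OF yj] p True by simp
      next
        case False
        obtain e where e: "e \<in> verts (G p)" using ne p by blast
        have pV: "(p,e) \<in> V" using e p by (simp add: inV)
        have "p \<noteq> i" using p by blast
        have "le p j" using trans p kI iI 2 by blast
        have "p \<noteq> j" proof assume "p = j" then show False using antisym[OF kI iI(2)] p 2 by simp qed
        have "(p,e) \<in> M" using P pV p \<open>p \<noteq> i\<close> \<open>le p j\<close> \<open>p \<noteq> j\<close> by blast
        moreover have "adj S (p,e) (k,c) = r p" using adj_lt[OF pV z(2) p(3) False] .
        ultimately show False using Q p by simp
      qed
    next
      case 3
      have "adj S (j,y) (k,c) = r j" using adj_lt[OF iV(2) z(2) 3(1)] 3(2) by simp
      then have rj: "r j = r i" using Q[OF yj] by simp
      obtain p where p: "p\<in>I" "le i p" "le p j" "r p \<noteq> r i" using interval_diff[of i j] iI lij by blast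
      have pij: "p \<noteq> i" "p \<noteq> j" using p rj by auto
      obtain e where e: "e \<in> verts (G p)" using ne p by blast
      have pV: "(p,e) \<in> V" using e p by (simp add: inV)
      have "(p,e) \<in> M" using P pV p pij by blast
      moreover have "le p k" using trans p kI iI 3 by blast
      moreover have "p \<noteq> k" proof assume "p = k" then show False using antisym[OF kI iI(2)] p 3 by simp qed
      ultimately have "adj S (p,e) (k,c) = r p" using adj_lt[OF pV z(2)] by simp
      then show False using Q[OF \<open>(p,e) \<in> M\<close>] p by simp
    next
      case 1
      have cy: "c \<noteq> y" using zn yj z 1 by auto
      obtain p where p: "p\<in>I" "le i p" "le p j" "r p \<noteq> r i" using interval_diff[of i j] iI lij by blast
      show False
      proof (cases "p = j")
        case False
        have pij: "p \<noteq> i" using p by auto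
        obtain e where e: "e \<in> verts (G p)" using ne p by blast
        have pV: "(p,e) \<in> V" using e p by (simp add: inV)
        have "(p,e) \<in> M" using P pV p pij False by blast
        moreover have "adj S (p,e) (k,c) = r p" using adj_lt[OF pV z(2)] p False 1 by simp
        ultimately show False using Q p by simp
      next
        case True
        hence rj: "r j \<noteq> r i" using p by simp
        show False
        proof (cases "\<exists>q\<in>I. le j q \<and> q \<noteq> j")
          case True
          then obtain q where q: "q\<in>I" "le j q" "q\<noteq>j" by blast
          obtain e' where e': "e' \<in> verts (G q)" using ne q by blast
          have qV: "(q,e') \<in> V" using e' q by (simp add: inV)
          have "le i q" using trans iI q lij by blast
          have "i \<noteq> q" proof assume "i = q" then show False using antisym[OF iI(1) iI(2)] q lij by simp qed
          have "(q,e') \<in> M"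
          proof (rule ccontr)
            assume "(q,e') \<notin> M"
            then have "adj S (i,x) (q,e') = adj S (j,y) (q,e')" using meq[OF M] xi yj qV by blast
            moreover have "adj S (i,x) (q,e') = r i" using adj_lt[OF iV(1) qV \<open>le i q\<close> \<open>i \<noteq> q\<close>] .
            moreover have "adj S (j,y) (q,e') = r j" using adj_lt[OF iV(2) qV q(2)] q(3) by simp
            ultimately show False using rj by simp
          qed
          moreover have "adj S (q,e') (k,c) = r j" using adj_gt[OF qV z(2)] q 1 by simp
          ultimately show False using Q rj by simp
        next
          case False
          then have "\<forall>q\<in>I. le q j" using total iI by blast
          moreover have "y \<in> verts (G j)" "c \<in> verts (G j)" using iV z 1 by (auto simp: inV)
          ultimately have "adj (G j) y c = r j" using max_block iI cy by blast
          then have "adj S (j,y) (k,c) = r j" using adj_eq[OF iV(2)] z 1 by simp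
          then show False using Q[OF yj] rj by simp
        qed
      qed
    qed
  qed
qed

lemma graphG: "i \<in> I \<Longrightarrow> is_graph (G i)"
  using lc unfolding labelled_chain_def cograph_def by blast

lemma adj_sym: "adj S u w = adj S w u"
proof -
  obtain i x j y where u: "u = (i,x)" and w: "w = (j,y)" by (cases u, cases w) auto
  show ?thesis
  proof (cases "(i,x) \<in> V \<and> (j,y) \<in> V")
    case False then show ?thesis using u w by (auto simp: adj_S)
  next
    case True
    then have ij: "i \<in> I" "j \<in> I" by (auto simp: inV)
    show ?thesis
    proof (cases "i = j")
      case True
      then show ?thesis using u w graphG[OF ij(1)] unfolding is_graph_def by (auto simp: adj_S)
    next
      case False
      then show ?thesis using u w antisym[OF ij] total[OF ij] by (auto simp: adj_S)
    qed
  qed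
qed

lemma inU: "z \<in> U k \<longleftrightarrow> z \<in> V \<and> le k (fst z)" unfolding U_def by simp
lemma inUg: "z \<in> Ug k \<longleftrightarrow> z \<in> V \<and> le k (fst z) \<and> fst z \<noteq> k" unfolding Ug_def by simp
lemma inB: "z \<in> B k \<longleftrightarrow> z \<in> V \<and> fst z = k" unfolding B_def by simp
lemma fstI: "z \<in> V \<Longrightarrow> fst z \<in> I" unfolding V_def by auto

lemma U_split: "k \<in> I \<Longrightarrow> U k = B k \<union> Ug k"
  unfolding U_def B_def Ug_def using refl by auto

lemma U_sub_Ug: assumes "p \<in> I" "k \<in> I" "le p k" "p \<noteq> k" shows "U k \<subseteq> Ug p"
proof
  fix z assume z: "z \<in> U k"
  then have zV: "z \<in> V" "le k (fst z)" by (auto simp: inU)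
  have fz: "fst z \<in> I" using fstI zV by blast
  have "le p (fst z)" using trans[OF assms(1,2) fz assms(3) zV(2)] .
  moreover have "fst z \<noteq> p" using antisym[OF assms(1,2) assms(3)] zV assms(4) by auto
  ultimately show "z \<in> Ug p" using zV by (simp add: inUg)
qed

lemma U_module: assumes kI: "k \<in> I" shows "is_module S (U k)"
  unfolding is_module_def verts_S
proof (intro conjI ballI)
  show "U k \<subseteq> V" unfolding U_def by blast
  have key: "adj S a b = r (fst b)" if a: "a \<in> U k" and b: "b \<in> V - U k" for a b
  proof -
    obtain j y where a1: "a = (j,y)" by (cases a)
    obtain p e where b1: "b = (p,e)" by (cases b)
    have aV: "(j,y) \<in> V" "le k j" using a a1 by (auto simp: inU)
    have bV: "(p,e) \<in> V" "\<not> le k p" using b b1 by (auto simp: inU)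
    have jI: "j \<in> I" "p \<in> I" using aV bV by (auto simp: inV)
    have "le p k" using total[OF jI(2) kI] bV by blast
    then have "le p j" using trans[OF jI(2) kI jI(1)] aV by blast
    moreover have "j \<noteq> p" using aV bV by auto
    ultimately show ?thesis using adj_gt[OF aV(1) bV(1)] a1 b1 by simp
  qed
  fix a a' b assume "a \<in> U k" "a' \<in> U k" "b \<in> V - U k"
  then show "adj S a b = adj S a' b" using key by simp
qed

lemma U_strong: assumes kI: "k \<in> I" shows "strong_module S (U k)"
  unfolding strong_module_def
proof (intro conjI allI impI)
  show "is_module S (U k)" using U_module[OF kI] .
  fix M assume M: "is_module S M"
  show "U k \<subseteq> M \<or> M \<subseteq> U k \<or> U k \<inter> M = {}"
  proof (rule ccontr)
    assume nt: "\<not> (U k \<subseteq> M \<or> M \<subseteq> U k \<or> U k \<inter> M = {})"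
    then obtain z w where z: "z \<in> M" "z \<notin> U k" and w: "w \<in> U k" "w \<in> M" by blast
    obtain p e where zz: "z = (p,e)" by (cases z)
    obtain q y where ww: "w = (q,y)" by (cases w)
    have zV: "(p,e) \<in> V" using MV[OF M] z zz by auto
    have wV: "(q,y) \<in> V" "le k q" using w ww by (auto simp: inU)
    have I': "p \<in> I" "q \<in> I" using zV wV by (auto simp: inV)
    have "\<not> le k p" using z zz zV by (auto simp: inU)
    then have pk: "le p k" "p \<noteq> k" using total[OF I'(1) kI] refl[OF kI] by auto
    have "le p q" using trans[OF I'(1) kI I'(2) pk(1) wV(2)] .
    moreover have "p \<noteq> q" using \<open>\<not> le k p\<close> wV by auto
    ultimately have "Ug p \<subseteq> M" using lemA[OF M] z w zz ww by blast
    moreover have "U k \<subseteq> Ug p" using U_sub_Ug[OF I'(1) kI pk] .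
    ultimately show False using nt by blast
  qed
qed

lemma lemC:
  assumes T: "strong_module S T" and px: "(p,x) \<in> T" and qy: "(q,y) \<in> T" and qp: "q \<noteq> p"
  shows "U p \<subseteq> T"
proof -
  have TM: "is_module S T" using strong_mod[OF T] .
  have TV: "T \<subseteq> V" using MV[OF TM] .
  have pqV: "(p,x) \<in> V" "(q,y) \<in> V" using TV px qy by auto
  have I': "p \<in> I" "q \<in> I" using pqV by (auto simp: inV)
  show ?thesis
  proof (cases "le q p")
    case True
    have "Ug q \<subseteq> T" using lemA[OF TM qy px True qp] .
    moreover have "U p \<subseteq> Ug q" using U_sub_Ug[OF I'(2) I'(1) True qp] .
    ultimately show ?thesis by blast
  next
    case False
    then have lpq: "le p q" using total[OF I'] by blast
    have Ug: "Ug p \<subseteq> T" using lemA[OF TM px qy lpq] qp by metis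
    have "B p \<subseteq> T"
    proof (rule ccontr)
      assume "\<not> B p \<subseteq> T"
      then obtain z where z: "z \<in> B p" "z \<notin> T" by blast
      then have zz: "z = (p, snd z)" by (cases z) (auto simp: inB)
      define c where "c = snd z"
      have c: "(p,c) \<in> B p" "(p,c) \<notin> T" using z zz c_def by auto
      define Tm where "Tm = {z \<in> B p. z \<notin> T} \<union> Ug p"
      have TmV: "Tm \<subseteq> V" unfolding Tm_def B_def Ug_def by blast
      have val: "adj S a b = (if fst b = p then r p else r (fst b))" if a: "a \<in> Tm" and b: "b \<in> V" "b \<notin> Tm" for a b
      proof -
        obtain j v where a1: "a = (j,v)" by (cases a)
        obtain k e where b1: "b = (k,e)" by (cases b)
        have aV: "(j,v) \<in> V" "le p j" using a a1 refl[OF I'(1)] unfolding Tm_def by (auto simp: inB inUg)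
        have bV: "(k,e) \<in> V" using b b1 by simp
        have jk: "j \<in> I" "k \<in> I" using aV bV by (auto simp: inV)
        show ?thesis
        proof (cases "k = p")
          case True
          then have bT: "(k,e) \<in> T" using b b1 unfolding Tm_def by (auto simp: inB)
          show ?thesis
          proof (cases "j = p")
            case True
            then have aT: "(j,v) \<notin> T" using a a1 unfolding Tm_def by (auto simp: inUg)
            have "adj S (k,e) (j,v) = adj S (q,y) (j,v)" using meq[OF TM bT qy aV(1) aT] .
            moreover have "adj S (q,y) (j,v) = r p" using adj_gt[OF pqV(2) aV(1)] lpq qp True by simp
            ultimately have "adj S (j,v) (k,e) = r p" using adj_sym[of "(j,v)" "(k,e)"] by simp
            then show ?thesis using a1 b1 \<open>k = p\<close> by simp
          next
            case False
            then show ?thesis using adj_gt[OF aV(1) bV] aV \<open>k = p\<close> a1 b1 by simp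
          qed
        next
          case False
          then have "\<not> le p k" using b b1 bV unfolding Tm_def by (auto simp: inUg)
          then have "le k p" using total[OF I'(1) jk(2)] by blast
          then have "le k j" using trans[OF jk(2) I'(1) jk(1)] aV by blast
          moreover have "j \<noteq> k" using aV \<open>\<not> le p k\<close> by auto
          ultimately show ?thesis using adj_gt[OF aV(1) bV] a1 b1 False by simp
        qed
      qed
      have "is_module S Tm" unfolding is_module_def verts_S
        using TmV val by auto
      then have "T \<subseteq> Tm \<or> Tm \<subseteq> T \<or> T \<inter> Tm = {}" using strong_cmp[OF T] by blast
      moreover have "(p,x) \<notin> Tm" using px unfolding Tm_def by (auto simp: inUg)
      moreover have "(p,c) \<in> Tm" using c unfolding Tm_def by blast
      moreover have "(q,y) \<in> Tm" using pqV lpq qp unfolding Tm_def by (auto simp: inUg)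
      ultimately show False using px c qy by blast
    qed
    then show ?thesis using U_split[OF I'(1)] Ug by blast
  qed
qed

lemma lemD:
  assumes R: "robust_module S R" and ix: "(i,x) \<in> R"
  shows "R \<subseteq> B i \<or> (\<exists>k\<in>I. le k i \<and> R = U k)"
proof -
  from R consider (s) z where "z \<in> V" "R = {z}"
    | (p) a b where "a \<in> V" "b \<in> V" "a \<noteq> b" "R = \<Inter>{T. strong_module S T \<and> {a,b} \<subseteq> T}"
    unfolding robust_module_def verts_S by blast
  then show ?thesis
  proof cases
    case s then show ?thesis using ix by (auto simp: inB)
  next
    case p
    define F where "F = {T. strong_module S T \<and> {a,b} \<subseteq> T}"
    have RF: "R = \<Inter>F" using p F_def by simp
    have "le (fst a) (fst b) \<or> le (fst b) (fst a)" using total fstI p by blast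
    then obtain a0 b0 where ab: "{a0,b0} = {a,b}" "le (fst a0) (fst b0)" and abV: "a0 \<in> V" "b0 \<in> V"
    proof (elim disjE)
      assume "le (fst a) (fst b)"
      then show thesis using that[of a b] p by simp
    next
      assume "le (fst b) (fst a)"
      moreover have "{b,a} = {a,b}" by blast
      ultimately show thesis using that[of b a] p by simp
    qed
    define p0 where "p0 = fst a0"
    have p0I: "p0 \<in> I" using fstI abV p0_def by blast
    show ?thesis
    proof (cases "\<exists>T\<in>F. T \<subseteq> B p0")
      case True
      then obtain T where "T \<in> F" "T \<subseteq> B p0" by blast
      then have RB: "R \<subseteq> B p0" using RF by blast
      then have "p0 = i" using ix by (auto simp: inB)
      then show ?thesis using RB by simp
    next
      case False
      have sub: "U p0 \<subseteq> T" if "T \<in> F" for T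
      proof -
        have Tab: "strong_module S T" "a \<in> T" "b \<in> T" using that unfolding F_def by auto
        have "a0 \<in> {a0,b0}" "b0 \<in> {a0,b0}" by simp_all
        then have "a0 \<in> {a,b}" "b0 \<in> {a,b}" unfolding ab(1) .
        then have "a0 \<in> T" "b0 \<in> T" using Tab(2,3) by blast+
        then have T: "strong_module S T" "a0 \<in> T" "b0 \<in> T" using Tab(1) by simp_all
        have nT: "\<not> T \<subseteq> B p0"
        proof
          assume "T \<subseteq> B p0"
          then have "\<exists>T\<in>F. T \<subseteq> B p0" using that by blast
          then show False using \<open>\<not> (\<exists>T\<in>F. T \<subseteq> B p0)\<close> by simp
        qed
        then obtain z where z: "z \<in> T" "z \<notin> B p0" by blast
        have "z \<in> V" using strong_sub[OF T(1)] verts_S z by auto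
        then have "fst z \<noteq> p0" using z by (auto simp: inB)
        moreover have "(p0, snd a0) \<in> T" using T(2) p0_def by simp
        moreover have "(fst z, snd z) \<in> T" using z by simp
        ultimately show ?thesis using lemC[OF T(1)] by blast
      qed
      have "a0 \<in> U p0" "b0 \<in> U p0" using abV ab(2) refl[OF p0I] p0_def by (auto simp: inU)
      moreover have "a \<in> {a0,b0}" "b \<in> {a0,b0}" unfolding ab(1) by simp_all
      ultimately have "U p0 \<in> F" unfolding F_def using U_strong[OF p0I] by auto
      then have RU: "R = U p0" using sub RF by blast
      moreover have "le p0 i" using ix RU by (auto simp: inU)
      ultimately show ?thesis using p0I by blast
    qed
  qed
qed

lemma lemF:
  assumes kI: "k \<in> I" and jI: "j \<in> I" and kj: "le k j" "j \<noteq> k" shows "robust_module S (U k)"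
proof -
  obtain x where x: "x \<in> verts (G k)" using ne kI by blast
  obtain y where y: "y \<in> verts (G j)" using ne jI by blast
  have V': "(k,x) \<in> V" "(j,y) \<in> V" using x y kI jI by (auto simp: inV)
  have inU': "(k,x) \<in> U k" "(j,y) \<in> U k" using V' kj refl[OF kI] by (auto simp: inU)
  have "U k = \<Inter>{T. strong_module S T \<and> {(k,x),(j,y)} \<subseteq> T}"
  proof
    show "U k \<subseteq> \<Inter>{T. strong_module S T \<and> {(k,x),(j,y)} \<subseteq> T}"
      using lemC[of _ k x j y] kj by blast
    show "\<Inter>{T. strong_module S T \<and> {(k,x),(j,y)} \<subseteq> T} \<subseteq> U k"
      using U_strong[OF kI] inU' by blast
  qed
  moreover have "(k,x) \<noteq> (j,y)" using kj by simp
  ultimately show ?thesis unfolding robust_module_def verts_S using V' by blast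
qed

lemma U_mono: assumes "a \<in> I" "b \<in> I" shows "U b \<subseteq> U a \<longleftrightarrow> le a b"
proof
  assume h: "U b \<subseteq> U a"
  obtain y where y: "y \<in> verts (G b)" using ne assms by blast
  have "(b,y) \<in> U b" using y assms refl by (auto simp: inU inV)
  then have "(b,y) \<in> U a" using h by blast
  then show "le a b" by (simp add: inU)
next
  assume h: "le a b"
  show "U b \<subseteq> U a"
  proof
    fix z assume "z \<in> U b"
    then have "z \<in> V" "le b (fst z)" by (auto simp: inU)
    then show "z \<in> U a" using trans[OF assms fstI[OF \<open>z \<in> V\<close>] h] by (auto simp: inU)
  qed
qed

lemma U_inj: assumes "a \<in> I" "b \<in> I" "U a = U b" shows "a = b"
proof -
  have "le a b" using U_mono[OF assms(1,2)] assms(3) by simp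
  moreover have "le b a" using U_mono[OF assms(2,1)] assms(3) by simp
  ultimately show ?thesis using antisym[OF assms(1,2)] by simp
qed

lemma U_notB: assumes "k \<in> I" "k \<noteq> i" shows "\<not> U k \<subseteq> B i"
proof
  assume h: "U k \<subseteq> B i"
  obtain y where y: "y \<in> verts (G k)" using ne assms by blast
  have "(k,y) \<in> U k" using y assms refl by (auto simp: inU inV)
  then show False using h assms by (auto simp: inB)
qed

lemma vU: "(i,x) \<in> V \<Longrightarrow> le k i \<Longrightarrow> (i,x) \<in> U k"
  by (simp add: inU)

lemma min_robust: assumes i0: "i0 \<in> I" "\<forall>j\<in>I. le i0 j" shows "robust_module S V"
proof -
  have UV: "U i0 = V" using i0 fstI by (auto simp: inU)
  have "\<not> I \<subseteq> {i0}" using infI finite_subset by blast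
  then obtain j where "j \<in> I" "j \<noteq> i0" by blast
  then show ?thesis using lemF[OF i0(1)] i0 UV by metis
qed

lemma finite_has_min: "finite A \<Longrightarrow> A \<noteq> {} \<Longrightarrow> A \<subseteq> I \<Longrightarrow> \<exists>m\<in>A. \<forall>a\<in>A. le m a"
proof (induction A rule: finite_ne_induct)
  case (singleton x)
  then show ?case using refl by simp
next
  case (insert x F)
  then obtain m where m: "m \<in> F" "\<forall>a\<in>F. le m a" by blast
  have xI: "x \<in> I" and mI: "m \<in> I" using insert m by auto
  show ?case
  proof (cases "le x m")
    case True
    have "\<forall>a\<in>insert x F. le x a"
    proof
      fix a assume "a \<in> insert x F"
      then show "le x a"
      proof
        assume "a = x" then show ?thesis using refl xI by simp
      next
        assume aF: "a \<in> F"
        then have "a \<in> I" using insert by auto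
        then show ?thesis using trans[OF xI mI] True m aF by blast
      qed
    qed
    then show ?thesis by blast
  next
    case False
    then have "le m x" using total[OF xI mI] by blast
    then have "\<forall>a\<in>insert x F. le m a" using m by blast
    then show ?thesis using m by blast
  qed
qed

lemma init_seg: "c \<in> I \<Longrightarrow> initial_segment I le {k\<in>I. le k c \<and> k \<noteq> c}"
  unfolding initial_segment_def
proof (intro conjI ballI impI)
  fix w i assume c: "c \<in> I" and w: "w \<in> {k\<in>I. le k c \<and> k \<noteq> c}" and i: "i \<in> I" and iw: "le i w"
  have wI: "w \<in> I" "le w c" "w \<noteq> c" using w by auto
  have "le i c" using trans[OF i wI(1) c iw wI(2)] .
  moreover have "i \<noteq> c"
  proof
    assume "i = c"
    then show False using antisym[OF wI(1) c] wI iw by simp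
  qed
  ultimately show "i \<in> {k\<in>I. le k c \<and> k \<noteq> c}" using i by blast
qed auto

lemma inf_below:
  assumes c: "c \<in> I" and nm: "\<forall>i\<in>I. \<exists>k\<in>I. le k i \<and> k \<noteq> i"
  shows "infinite {k\<in>I. le k c \<and> k \<noteq> c}"
proof
  define W where "W = {k\<in>I. le k c \<and> k \<noteq> c}"
  assume fin: "finite {k\<in>I. le k c \<and> k \<noteq> c}"
  then have fW: "finite W" using W_def by simp
  obtain k where k: "k \<in> I" "le k c" "k \<noteq> c" using nm c by blast
  then have "W \<noteq> {}" unfolding W_def by blast
  moreover have "W \<subseteq> I" unfolding W_def by blast
  ultimately obtain m where m: "m \<in> W" "\<forall>a\<in>W. le m a" using finite_has_min[OF fW] by blast
  have mI: "m \<in> I" "le m c" "m \<noteq> c" using m unfolding W_def by auto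
  obtain m2 where m2: "m2 \<in> I" "le m2 m" "m2 \<noteq> m" using nm mI by blast
  have "le m2 c" using trans[OF m2(1) mI(1) c m2(2) mI(2)] .
  moreover have "m2 \<noteq> c"
  proof
    assume "m2 = c" then show False using antisym[OF mI(1) c] mI m2 by simp
  qed
  ultimately have "m2 \<in> W" using m2 unfolding W_def by blast
  then have "le m m2" using m by blast
  then show False using antisym[OF mI(1) m2(1)] m2 by simp
qed

lemma Ug_char:
  assumes kI: "k \<in> I" and c: "c \<in> I" and kc: "le k c" "k \<noteq> c"
  shows "z \<in> Ug k \<longleftrightarrow> (\<exists>j\<in>I. le j c \<and> le k j \<and> j \<noteq> k \<and> z \<in> U j)"
proof
  assume z: "z \<in> Ug k"
  then have zV: "z \<in> V" "le k (fst z)" "fst z \<noteq> k" by (auto simp: inUg)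
  have tI: "fst z \<in> I" using fstI zV by blast
  show "\<exists>j\<in>I. le j c \<and> le k j \<and> j \<noteq> k \<and> z \<in> U j"
  proof (cases "le (fst z) c")
    case True
    then show ?thesis using tI zV refl[OF tI] by (auto simp: inU)
  next
    case False
    then have "le c (fst z)" using total[OF tI c] by blast
    then show ?thesis using c kc zV refl[OF c] by (auto simp: inU)
  qed
next
  assume "\<exists>j\<in>I. le j c \<and> le k j \<and> j \<noteq> k \<and> z \<in> U j"
  then obtain j where j: "j \<in> I" "le k j" "j \<noteq> k" "z \<in> U j" by blast
  then have zV: "z \<in> V" "le j (fst z)" by (auto simp: inU)
  have tI: "fst z \<in> I" using fstI zV by blast
  have "le k (fst z)" using trans[OF kI j(1) tI j(2) zV(2)] .
  moreover have "fst z \<noteq> k"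
  proof
    assume "fst z = k" then show False using antisym[OF kI j(1)] j zV by simp
  qed
  ultimately show "z \<in> Ug k" using zV by (simp add: inUg)
qed

end


lemma inj_on_img_sub: assumes "inj_on f C" "A \<subseteq> C" "B \<subseteq> C" shows "f ` A \<subseteq> f ` B \<longleftrightarrow> A \<subseteq> B"
proof
  assume h: "f ` A \<subseteq> f ` B"
  show "A \<subseteq> B"
  proof
    fix a assume a: "a \<in> A"
    then have "f a \<in> f ` B" using h by blast
    then show "a \<in> B" using inj_on_image_mem_iff[OF assms(1) _ assms(3)] a assms(2) by blast
  qed
qed blast

lemma core:
  fixes I :: "'i set" and le :: "'i \<Rightarrow> 'i \<Rightarrow> bool" and G :: "'i \<Rightarrow> 'v graph" and r :: "'i \<Rightarrow> bool"
    and I' :: "'j set" and le' :: "'j \<Rightarrow> 'j \<Rightarrow> bool" and G' :: "'j \<Rightarrow> 'w graph" and r' :: "'j \<Rightarrow> bool"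
  assumes rcC: "rc I le G r" and rcD: "rc I' le' G' r'"
    and iso: "iso_map f (chain_sum I le G r) (chain_sum I' le' G' r')"
    and nm: "\<forall>i\<in>I. \<exists>k\<in>I. le k i \<and> k \<noteq> i" and nm': "\<forall>i\<in>I'. \<exists>k\<in>I'. le' k i \<and> k \<noteq> i"
  shows "\<exists>W W' h. initial_segment I le W \<and> infinite W \<and>
                  initial_segment I' le' W' \<and> infinite W' \<and>
                  lchain_iso W le G r W' le' G' r' h"
proof -
  interpret C: rc I le G r by (rule rcC)
  interpret D: rc I' le' G' r' by (rule rcD)
  let ?SC = "chain_sum I le G r" and ?SD = "chain_sum I' le' G' r'"
  define g where "g = inv_into C.V f"
  have bij: "bij_betw f C.V D.V" using iso unfolding iso_map_def C.verts_S D.verts_S by blast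
  have inj: "inj_on f C.V" using bij by (rule bij_betw_imp_inj_on)
  have fV: "f ` C.V = D.V" using bij by (rule bij_betw_imp_surj_on)
  have adjf: "\<forall>x\<in>C.V. \<forall>y\<in>C.V. adj ?SC x y \<longleftrightarrow> adj ?SD (f x) (f y)" using iso unfolding iso_map_def C.verts_S by blast
  have giso: "iso_map g ?SD ?SC" using iso_inv[OF iso] unfolding g_def C.verts_S .
  have fR: "robust_module ?SD (f ` R)" if "robust_module ?SC R" for R using iso_robust[OF iso that] .
  have gR: "robust_module ?SC (g ` R)" if "robust_module ?SD R" for R using iso_robust[OF giso that] .
  have fg: "f ` (g ` X) = X" if "X \<subseteq> D.V" for X
    using that fV unfolding g_def by (simp add: image_inv_into_cancel)
  have gf: "g ` (f ` Y) = Y" if "Y \<subseteq> C.V" for Y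
    using that inj unfolding g_def by (simp add: inv_into_image_cancel)
  have gfx: "g (f z) = z" if "z \<in> C.V" for z using that inj unfolding g_def by simp
  have UsubC: "C.U k \<subseteq> C.V" for k unfolding C.U_def by blast
  have UsubD: "D.U k \<subseteq> D.V" for k unfolding D.U_def by blast

  have "I \<noteq> {}" using C.infI by auto
  then obtain i where iI: "i \<in> I" by blast
  obtain x where x: "x \<in> verts (G i)" using C.ne iI by blast
  define v where "v = (i,x)"
  have vV: "v \<in> C.V" using iI x v_def by (simp add: C.inV)
  obtain i' x' where fv: "f v = (i',x')" by (cases "f v")
  have fvV: "(i',x') \<in> D.V" using vV bij fv bij_betwE by fastforce
  have i'I: "i' \<in> I'" using fvV by (simp add: D.inV)
  obtain k1' where k1': "k1' \<in> I'" "le' k1' i'" "k1' \<noteq> i'" using nm' i'I by blast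
  define R0 where "R0 = g ` (D.U k1')"
  have R0r: "robust_module ?SC R0" unfolding R0_def using gR D.lemF[OF k1'(1) i'I k1'(2)] k1'(3) by metis
  have "f v \<in> D.U k1'" using fvV k1' fv by (simp add: D.inU)
  then have vR0: "v \<in> R0" unfolding R0_def using gfx[OF vV] by (metis image_eqI)
  have fR0: "f ` R0 = D.U k1'" unfolding R0_def using fg UsubD by blast

  obtain k0 where k0: "k0 \<in> I" "le k0 i" "k0 \<noteq> i" "R0 \<subseteq> C.U k0"
  proof -
    from C.lemD[OF R0r vR0[unfolded v_def]]
    show thesis
    proof
      assume h: "R0 \<subseteq> C.B i"
      obtain k where k: "k \<in> I" "le k i" "k \<noteq> i" using nm iI by blast
      have "C.B i \<subseteq> C.U k" using k by (auto simp: C.inB C.inU)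
      then show thesis using that k h by blast
    next
      assume "\<exists>k\<in>I. le k i \<and> R0 = C.U k"
      then obtain k where k: "k \<in> I" "le k i" "R0 = C.U k" by blast
      obtain k2 where k2: "k2 \<in> I" "le k2 k" "k2 \<noteq> k" using nm k by blast
      have "C.U k \<subseteq> C.U k2" using C.U_mono[OF k2(1) k(1)] k2 by simp
      moreover have "le k2 i" using C.trans[OF k2(1) k(1) iI k2(2) k(2)] .
      moreover have "k2 \<noteq> i"
      proof
        assume "k2 = i" then show False using C.antisym[OF k(1) iI] k k2 by simp
      qed
      ultimately show thesis using that k2 k by blast
    qed
  qed

  have below_i: "le k i \<and> k \<noteq> i" if "k \<in> I" "le k k0" for k
  proof
    show "le k i" using C.trans[OF that(1) k0(1) iI that(2) k0(2)] .
    show "k \<noteq> i"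
    proof
      assume "k = i" then show False using C.antisym[OF k0(1) iI] k0 that by simp
    qed
  qed

  have Q: "\<exists>k'\<in>I'. f ` (C.U k) = D.U k' \<and> le' k' k1'" if kI: "k \<in> I" and kk0: "le k k0" for k
  proof -
    have ki: "le k i" "k \<noteq> i" using below_i[OF kI kk0] by auto
    have rob: "robust_module ?SD (f ` C.U k)" using fR C.lemF[OF kI iI ki(1)] ki(2) by metis
    have "v \<in> C.U k" using vV ki v_def by (simp add: C.inU)
    then have fvU: "(i',x') \<in> f ` C.U k" using fv by (metis image_eqI)
    have "C.U k0 \<subseteq> C.U k" using C.U_mono[OF kI k0(1)] kk0 by simp
    then have sup: "D.U k1' \<subseteq> f ` C.U k" using fR0 k0(4) by blast
    from D.lemD[OF rob fvU]
    show ?thesis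
    proof
      assume "f ` C.U k \<subseteq> D.B i'"
      then show ?thesis using sup D.U_notB[OF k1'(1) k1'(3)] by blast
    next
      assume "\<exists>k'\<in>I'. le' k' i' \<and> f ` C.U k = D.U k'"
      then obtain k' where k': "k' \<in> I'" "f ` C.U k = D.U k'" by blast
      then have "le' k' k1'" using sup D.U_mono[OF k'(1) k1'(1)] by simp
      then show ?thesis using k' by blast
    qed
  qed
  define \<sigma> where "\<sigma> k = (SOME k'. k' \<in> I' \<and> f ` (C.U k) = D.U k')" for k
  have sig: "\<sigma> k \<in> I' \<and> f ` (C.U k) = D.U (\<sigma> k)" if "k \<in> I" "le k k0" for k
  proof -
    have "\<exists>k'. k' \<in> I' \<and> f ` (C.U k) = D.U k'" using Q[OF that] by blast
    then show ?thesis unfolding \<sigma>_def by (rule someI_ex)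
  qed
  have ord: "le k1 k2 \<longleftrightarrow> le' (\<sigma> k1) (\<sigma> k2)" if "k1 \<in> I" "le k1 k0" "k2 \<in> I" "le k2 k0" for k1 k2
  proof -
    have "le k1 k2 \<longleftrightarrow> C.U k2 \<subseteq> C.U k1" using C.U_mono[OF that(1,3)] by simp
    also have "\<dots> \<longleftrightarrow> f ` C.U k2 \<subseteq> f ` C.U k1" using inj_on_img_sub[OF inj UsubC UsubC] by simp
    also have "\<dots> \<longleftrightarrow> D.U (\<sigma> k2) \<subseteq> D.U (\<sigma> k1)" using sig that by simp
    also have "\<dots> \<longleftrightarrow> le' (\<sigma> k1) (\<sigma> k2)" using D.U_mono sig that by simp
    finally show ?thesis .
  qed
  have sinj: "k1 = k2" if "k1 \<in> I" "le k1 k0" "k2 \<in> I" "le k2 k0" "\<sigma> k1 = \<sigma> k2" for k1 k2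
  proof -
    have "le k1 k2" using ord[OF that(1-4)] that(5) D.refl sig that by simp
    moreover have "le k2 k1" using ord[OF that(3,4,1,2)] that(5) D.refl sig that by simp
    ultimately show ?thesis using C.antisym that by simp
  qed
  have sk0: "\<sigma> k0 \<in> I'" "f ` C.U k0 = D.U (\<sigma> k0)" using sig[OF k0(1) C.refl[OF k0(1)]] by auto
  have surj: "\<exists>m\<in>I. le m k0 \<and> \<sigma> m = k''" if k'': "k'' \<in> I'" "le' k'' (\<sigma> k0)" for k''
  proof (cases "k'' = \<sigma> k0")
    case True then show ?thesis using k0(1) C.refl[OF k0(1)] by blast
  next
    case False
    have rob: "robust_module ?SC (g ` D.U k'')" using gR D.lemF[OF k'' (1) sk0(1) k''(2)] False by metis
    have "v \<in> C.U k0" using vV below_i[OF k0(1) C.refl[OF k0(1)]] v_def by (simp add: C.inU)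
    then have "f v \<in> D.U (\<sigma> k0)" using sk0 by blast
    moreover have "D.U (\<sigma> k0) \<subseteq> D.U k''" using D.U_mono[OF k''(1) sk0(1)] k'' by simp
    ultimately have "f v \<in> D.U k''" by blast
    then have vin: "(i,x) \<in> g ` D.U k''" using gfx[OF vV] v_def by (metis image_eqI)
    have sup: "C.U k0 \<subseteq> g ` D.U k''"
    proof -
      have "g ` (f ` C.U k0) = C.U k0" using gf UsubC by blast
      then show ?thesis using sk0 \<open>D.U (\<sigma> k0) \<subseteq> D.U k''\<close> by (metis image_mono)
    qed
    from C.lemD[OF rob vin]
    show ?thesis
    proof
      assume "g ` D.U k'' \<subseteq> C.B i"
      then show ?thesis using sup C.U_notB[OF k0(1) k0(3)] by blast
    next
      assume "\<exists>k\<in>I. le k i \<and> g ` D.U k'' = C.U k"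
      then obtain m where m: "m \<in> I" "g ` D.U k'' = C.U m" by blast
      have mk0: "le m k0" using sup m C.U_mono[OF m(1) k0(1)] by simp
      have "f ` C.U m = D.U k''" using m(2) fg UsubD by metis
      then have "D.U (\<sigma> m) = D.U k''" using sig[OF m(1) mk0] by simp
      then have "\<sigma> m = k''" using D.U_inj sig[OF m(1) mk0] k''(1) by blast
      then show ?thesis using m mk0 by blast
    qed
  qed

  define W where "W = {k\<in>I. le k k0 \<and> k \<noteq> k0}"
  define W' where "W' = {k\<in>I'. le' k (\<sigma> k0) \<and> k \<noteq> \<sigma> k0}"
  have iW: "initial_segment I le W" unfolding W_def using C.init_seg[OF k0(1)] .
  have infW: "infinite W" unfolding W_def using C.inf_below[OF k0(1) nm] .
  have iW': "initial_segment I' le' W'" unfolding W'_def using D.init_seg[OF sk0(1)] .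
  have Wd: "k \<in> I" "le k k0" "k \<noteq> k0" if "k \<in> W" for k using that unfolding W_def by auto
  have sW1: "\<sigma> k \<in> W'" if "k \<in> W" for k
  proof -
    have "\<sigma> k \<in> I'" using sig Wd[OF that] by blast
    moreover have "le' (\<sigma> k) (\<sigma> k0)" using ord[OF Wd(1,2)[OF that] k0(1) C.refl[OF k0(1)]] Wd[OF that] by simp
    moreover have "\<sigma> k \<noteq> \<sigma> k0" using sinj[OF Wd(1,2)[OF that] k0(1) C.refl[OF k0(1)]] Wd(3)[OF that] by blast
    ultimately show ?thesis unfolding W'_def by blast
  qed
  have sW2: "k'' \<in> \<sigma> ` W" if "k'' \<in> W'" for k''
  proof -
    have k'': "k'' \<in> I'" "le' k'' (\<sigma> k0)" "k'' \<noteq> \<sigma> k0" using that unfolding W'_def by auto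
    obtain m where m: "m \<in> I" "le m k0" "\<sigma> m = k''" using surj[OF k''(1,2)] by blast
    have "m \<noteq> k0" using m k'' by auto
    then have "m \<in> W" using m unfolding W_def by blast
    then show ?thesis using m by blast
  qed
  have bijW: "bij_betw \<sigma> W W'"
    unfolding bij_betw_def
  proof
    show "inj_on \<sigma> W" unfolding inj_on_def using sinj Wd by blast
    show "\<sigma> ` W = W'" using sW1 sW2 by blast
  qed
  have infW': "infinite W'" using bijW infW bij_betw_finite by blast
  have ordW: "\<forall>a\<in>W. \<forall>b\<in>W. le a b \<longleftrightarrow> le' (\<sigma> a) (\<sigma> b)" using ord Wd by blast
  have blocks: "graph_iso (G k) (G' (\<sigma> k)) \<and> r k = r' (\<sigma> k)" if kW: "k \<in> W" for k
  proof -
    have kI: "k \<in> I" "le k k0" "k \<noteq> k0" using Wd[OF kW] by auto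
    define k' where "k' = \<sigma> k"
    have k'I: "k' \<in> I'" and fUk: "f ` C.U k = D.U k'" using sig[OF kI(1,2)] k'_def by auto
    have k'c: "le' k' (\<sigma> k0)" "k' \<noteq> \<sigma> k0" using sW1[OF kW] k'_def unfolding W'_def by auto
    have claimA: "f (k,a) \<in> D.B k'" if a: "a \<in> verts (G k)" for a
    proof -
      have kaV: "(k,a) \<in> C.V" using a kI by (simp add: C.inV)
      have "(k,a) \<in> C.U k" using kaV C.refl[OF kI(1)] by (simp add: C.inU)
      then have fU: "f (k,a) \<in> D.U k'" using fUk by blast
      have "f (k,a) \<notin> D.Ug k'"
      proof
        assume "f (k,a) \<in> D.Ug k'"
        then obtain j' where j': "j' \<in> I'" "le' j' (\<sigma> k0)" "le' k' j'" "j' \<noteq> k'" "f (k,a) \<in> D.U j'"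
          using D.Ug_char[OF k'I sk0(1) k'c] by blast
        obtain m where m: "m \<in> I" "le m k0" "\<sigma> m = j'" using surj[OF j'(1,2)] by blast
        have "f (k,a) \<in> f ` C.U m" using j'(5) sig[OF m(1,2)] m(3) by simp
        then have "(k,a) \<in> C.U m" using inj_on_image_mem_iff[OF inj kaV UsubC] by blast
        then have "le m k" by (simp add: C.inU)
        moreover have "le k m" using ord[OF kI(1,2) m(1,2)] j'(3) m(3) k'_def by simp
        ultimately have "m = k" using C.antisym[OF m(1) kI(1)] by simp
        then show False using j'(4) m(3) k'_def by simp
      qed
      then show ?thesis using fU D.U_split[OF k'I] by blast
    qed
    have claimB: "\<exists>a\<in>verts (G k). f (k,a) = b" if b: "b \<in> D.B k'" for b
    proof -
      have "b \<in> D.U k'" using b D.U_split[OF k'I] by blast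
      then obtain z where z: "z \<in> C.U k" "b = f z" using fUk by blast
      have "z \<notin> C.Ug k"
      proof
        assume "z \<in> C.Ug k"
        then obtain j where j: "j \<in> I" "le j k0" "le k j" "j \<noteq> k" "z \<in> C.U j"
          using C.Ug_char[OF kI(1) k0(1) kI(2,3)] by blast
        have sj: "\<sigma> j \<in> I'" "f ` C.U j = D.U (\<sigma> j)" using sig[OF j(1,2)] by auto
        have "b \<in> D.U (\<sigma> j)" using z j(5) sj(2) by blast
        then have "le' (\<sigma> j) k'" using b by (simp add: D.inU D.inB)
        moreover have "le' k' (\<sigma> j)" using ord[OF kI(1,2) j(1,2)] j(3) k'_def by simp
        ultimately have "\<sigma> j = k'" using D.antisym[OF sj(1) k'I] by simp
        then show False using sinj[OF j(1,2) kI(1,2)] j(4) k'_def by simp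
      qed
      then have "z \<in> C.B k" using z C.U_split[OF kI(1)] by blast
      then have "z = (k, snd z)" "snd z \<in> verts (G k)" by (cases z, simp add: C.inB C.inV)+
      then show ?thesis using z by metis
    qed
    define \<phi> where "\<phi> a = snd (f (k,a))" for a
    have fka: "f (k,a) = (k', \<phi> a)" "\<phi> a \<in> verts (G' k')" if "a \<in> verts (G k)" for a
    proof -
      have "f (k,a) \<in> D.B k'" using claimA[OF that] .
      then have "fst (f (k,a)) = k'" "f (k,a) \<in> D.V" by (simp_all add: D.inB)
      then show "f (k,a) = (k', \<phi> a)" "\<phi> a \<in> verts (G' k')" unfolding \<phi>_def
        by (metis prod.collapse, metis D.inV prod.collapse)
    qed
    have gi: "graph_iso (G k) (G' k')" unfolding graph_iso_def
    proof (intro exI conjI)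
      show "bij_betw \<phi> (verts (G k)) (verts (G' k'))" unfolding bij_betw_def
      proof
        show "inj_on \<phi> (verts (G k))" unfolding inj_on_def
        proof (intro ballI impI)
          fix a b assume a: "a \<in> verts (G k)" and b: "b \<in> verts (G k)" and e: "\<phi> a = \<phi> b"
          then have "f (k,a) = f (k,b)" using fka by simp
          moreover have "(k,a) \<in> C.V" "(k,b) \<in> C.V" using a b kI by (simp_all add: C.inV)
          ultimately show "a = b" using inj unfolding inj_on_def by blast
        qed
        show "\<phi> ` verts (G k) = verts (G' k')"
        proof
          show "\<phi> ` verts (G k) \<subseteq> verts (G' k')" using fka by blast
          show "verts (G' k') \<subseteq> \<phi> ` verts (G k)"
          proof
            fix b' assume b': "b' \<in> verts (G' k')"
            then have "(k',b') \<in> D.B k'" using k'I by (simp add: D.inB D.inV)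
            then obtain a where a: "a \<in> verts (G k)" "f (k,a) = (k',b')" using claimB by blast
            then have "\<phi> a = b'" using fka by simp
            then show "b' \<in> \<phi> ` verts (G k)" using a by blast
          qed
        qed
      qed
      show "\<forall>a\<in>verts (G k). \<forall>b\<in>verts (G k). adj (G k) a b = adj (G' k') (\<phi> a) (\<phi> b)"
      proof (intro ballI)
        fix a b assume a: "a \<in> verts (G k)" and b: "b \<in> verts (G k)"
        have V1: "(k,a) \<in> C.V" "(k,b) \<in> C.V" using a b kI by (simp_all add: C.inV)
        have V2: "(k',\<phi> a) \<in> D.V" "(k',\<phi> b) \<in> D.V" using fka a b k'I by (simp_all add: D.inV)
        have "adj (G k) a b = adj ?SC (k,a) (k,b)" using C.adj_eq[OF V1] by simp
        also have "\<dots> = adj ?SD (f (k,a)) (f (k,b))" using adjf V1 by blast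
        also have "\<dots> = adj ?SD (k',\<phi> a) (k',\<phi> b)" using fka a b by simp
        also have "\<dots> = adj (G' k') (\<phi> a) (\<phi> b)" using D.adj_eq[OF V2] by simp
        finally show "adj (G k) a b = adj (G' k') (\<phi> a) (\<phi> b)" .
      qed
    qed
    obtain a where a: "a \<in> verts (G k)" using C.ne kI by blast
    obtain e where e: "e \<in> verts (G k0)" using C.ne k0 by blast
    have V1: "(k,a) \<in> C.V" "(k0,e) \<in> C.V" using a e kI k0 by (simp_all add: C.inV)
    have A1: "adj ?SC (k,a) (k0,e) = r k" using C.adj_lt[OF V1 kI(2,3)] .
    have A2: "adj ?SC (k,a) (k0,e) = adj ?SD (f (k,a)) (f (k0,e))" using adjf V1 by blast
    have "(k0,e) \<in> C.U k0" using V1 C.refl[OF k0(1)] by (simp add: C.inU)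
    then have "f (k0,e) \<in> D.U (\<sigma> k0)" using sk0 by blast
    then obtain t e2 where t: "f (k0,e) = (t,e2)" "(t,e2) \<in> D.V" "le' (\<sigma> k0) t"
      by (cases "f (k0,e)") (auto simp: D.inU)
    have tI: "t \<in> I'" using t by (simp add: D.inV)
    have T1: "le' k' t" using D.trans[OF k'I sk0(1) tI k'c(1) t(3)] .
    have T2: "k' \<noteq> t"
    proof
      assume "k' = t" then show False using D.antisym[OF k'I sk0(1)] k'c t by simp
    qed
    have T3: "(k', \<phi> a) \<in> D.V" using fka a k'I by (simp add: D.inV)
    have "adj ?SD (k', \<phi> a) (t,e2) = r' k'" using D.adj_lt[OF T3 t(2) T1 T2] .
    then have "adj ?SD (f (k,a)) (f (k0,e)) = r' k'" using t fka[OF a] by simp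
    then have "r k = r' k'" using A1 A2 by simp
    then show ?thesis using gi k'_def by simp
  qed
  have "lchain_iso W le G r W' le' G' r' \<sigma>"
    unfolding lchain_iso_def using bijW ordW blocks by blast
  then show ?thesis using iW infW iW' infW' by blast
qed



lemma robust_sub: assumes "robust_module G A" shows "A \<subseteq> verts G"
proof -
  from assms consider (s) x where "x \<in> verts G" "A = {x}"
    | (p) x y where "x\<in>verts G" "y\<in>verts G" "A = \<Inter>{S. strong_module G S \<and> {x, y} \<subseteq> S}"
    unfolding robust_module_def by blast
  then show ?thesis
  proof cases
    case s then show ?thesis by simp
  next
    case p
    have "verts G \<in> {S. strong_module G S \<and> {x, y} \<subseteq> S}" using strong_verts p by simp
    then show ?thesis using p(3) by blast
  qed
qed

lemma nomin:
  assumes rcC: "rc I le G r" and iso: "iso_map f Gr (chain_sum I le G r)" and nl: "\<not> robust_has_least Gr"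
  shows "\<forall>i\<in>I. \<exists>k\<in>I. le k i \<and> k \<noteq> i"
proof (rule ccontr)
  interpret C: rc I le G r by (rule rcC)
  assume "\<not> (\<forall>i\<in>I. \<exists>k\<in>I. le k i \<and> k \<noteq> i)"
  then obtain i0 where i0: "i0 \<in> I" "\<forall>k\<in>I. le k i0 \<longrightarrow> k = i0" by blast
  have "\<forall>j\<in>I. le i0 j"
  proof
    fix j assume j: "j \<in> I"
    show "le i0 j"
    proof (cases "le i0 j")
      case False
      then have "le j i0" using C.total[OF j i0(1)] by blast
      then have "j = i0" using i0 j by blast
      then show ?thesis using C.refl[OF j] by simp
    qed
  qed
  then have rV: "robust_module (chain_sum I le G r) C.V" using C.min_robust[OF i0(1)] by blast
  define g where "g = inv_into (verts Gr) f"
  have giso: "iso_map g (chain_sum I le G r) Gr" using iso_inv[OF iso] g_def by simp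
  have "g ` C.V = verts Gr" using giso unfolding iso_map_def C.verts_S by (simp add: bij_betw_def)
  then have "robust_module Gr (verts Gr)" using iso_robust[OF giso rV] by simp
  then have "robust_has_least Gr" unfolding robust_has_least_def using robust_sub by blast
  then show False using nl by simp
qed

theorem lemma2p6:
  fixes Gr :: "'a graph" and Gr' :: "'b graph"
    and I :: "'i set" and le :: "'i \<Rightarrow> 'i \<Rightarrow> bool" and G :: "'i \<Rightarrow> 'v graph" and r :: "'i \<Rightarrow> bool"
    and I' :: "'j set" and le' :: "'j \<Rightarrow> 'j \<Rightarrow> bool" and G' :: "'j \<Rightarrow> 'w graph" and r' :: "'j \<Rightarrow> bool"
  assumes "cograph Gr" and "cograph Gr'" and "graph_iso Gr Gr'"
    and "\<not> robust_has_least Gr" and "\<not> robust_has_least Gr'"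
    and "labelled_chain I le G r" and "reduced_chain I le G r"
    and "labelled_chain I' le' G' r'" and "reduced_chain I' le' G' r'"
    and "graph_iso Gr (chain_sum I le G r)" and "graph_iso Gr' (chain_sum I' le' G' r')"
  shows "\<exists>W W' h. initial_segment I le W \<and> infinite W \<and>
                  initial_segment I' le' W' \<and> infinite W' \<and>
                  lchain_iso W le G r W' le' G' r' h"
proof -
  have rcC: "rc I le G r" using assms(6,7) by (rule rc.intro)
  have rcD: "rc I' le' G' r'" using assms(8,9) by (rule rc.intro)
  obtain f1 where f1: "iso_map f1 Gr (chain_sum I le G r)" using assms(10) graph_iso_map by blast
  obtain f2 where f2: "iso_map f2 Gr Gr'" using assms(3) graph_iso_map by blast
  obtain f3 where f3: "iso_map f3 Gr' (chain_sum I' le' G' r')" using assms(11) graph_iso_map by blast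
  have "iso_map (f3 \<circ> (f2 \<circ> inv_into (verts Gr) f1)) (chain_sum I le G r) (chain_sum I' le' G' r')"
    using iso_comp[OF iso_comp[OF iso_inv[OF f1] f2] f3] .
  moreover have "\<forall>i\<in>I. \<exists>k\<in>I. le k i \<and> k \<noteq> i" using nomin[OF rcC f1 assms(4)] .
  moreover have "\<forall>i\<in>I'. \<exists>k\<in>I'. le' k i \<and> k \<noteq> i" using nomin[OF rcD f3 assms(5)] .
  ultimately show ?thesis using core[OF rcC rcD] by blast
qed


end
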